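(* In a $\$$-bounded contract, for all $\mathcal{A}\subseteq\mathbb{A}$, all mempools $\mathcal{P}\subseteq\mathbb{X}$ and all (reachable) states $s$, $\mathrm{MEV}_{\mathcal{A}}(s,\mathcal{P})$ is defined and non-negative.
   Context: Fix a countably infinite set $\mathbb{A}$ of actors, a set $\mathbb{T}$ of token types and a set $\mathbb{X}$ of transactions. A wallet is a function $\mathbb{T}\to\mathbb{N}$; $\mathbb{W}_{\mathrm{fin}}$ is the set of finite-support wallets. A wallet state is $W:\mathbb{A}\to(\mathbb{T}\to\mathbb{N})$ satisfying the finite tokens axiom $\sum_{\tau}\sum_{a\in\mathbb{A}}W(a)(\tau)\in\mathbb{N}$. A contract consists of blockchain states $\mathbb{S}=\mathbb{C}\times\mathbb{W}$ (contract state, wallet state), a partial transition function $\mapsto:(\mathbb{S}\times\mathbb{X})\rightharpoonup\mathbb{S}$ and initial states $\mathbb{S}_0$. A transaction $x$ is valid in $s$ if $s\xmapsto{x}s'$ for some $s'$. For finite sequences, $s\xrightarrow{\varepsilon}s$, and $s\xrightarrow{\vec{Y}x}s'$ iff either $s\xrightarrow{\vec{Y}}s''\xmapsto{x}s'$, or $s\xrightarrow{\vec{Y}}s'$ and $x$ is not valid in $s'$. $s$ is reachable if $s_0\xrightarrow{\vec X}s$ for some $s_0\in\mathbb{S}_0$ and some $\vec X$. $W_{\mathcal{A}}(s)=\sum_{a\in\mathcal{A}}W(s)(a)$. A wealth function is an additive map $\$:\mathbb{W}_{\mathrm{fin}}\to\mathbb{N}$; $\$_{\mathcal{A}}(s)=\$(W_{\mathcal{A}}(s))$;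 the gain is $G_{\mathcal{A}}(s,\vec{X})=\$_{\mathcal{A}}(s')-\$_{\mathcal{A}}(s)$ where $s\xrightarrow{\vec X}s'$. The contract is $\$$-bounded if for every $s_0\in\mathbb{S}_0$ there is $n$ such that $\$_{\mathbb{A}}(s)<n$ for all $s$ reachable from $s_0$. A transaction deducibility function $\kappa:\mathcal{P}(\mathbb{A})\times\mathcal{P}(\mathbb{X})\to\mathcal{P}(\mathbb{X})$, $(\mathcal{A},\mathcal{X})\mapsto\kappa_{\mathcal{A}}(\mathcal{X})$, satisfies: extensivity $\mathcal{X}\subseteq\kappa_{\mathcal{A}}(\mathcal{X})$; idempotence $\kappa_{\mathcal{A}}(\kappa_{\mathcal{A}}(\mathcal{X}))=\kappa_{\mathcal{A}}(\mathcal{X})$; monotonicity in both arguments; continuity $\kappa_{\mathcal{A}}(\bigcup_i\mathcal{X}_i)=\bigcup_i\kappa_{\mathcal{A}}(\mathcal{X}_i)$ for increasing chains; finite causes (every finite $\mathcal{X}_0$ is contained in $\kappa_{\mathcal{A}_0}(\emptyset)$ for some finite $\mathcal{A}_0$); private knowledge ($\kappa_{\mathcal{A}}(\emptyset)\subseteq\kappa_{\mathcal{A}'}(\emptyset)$ implies $\mathcal{A}\subseteq\mathcal{A}'$); no shared secrets ($\kappa_{\mathcal{A}}(\mathcal{X})\cap\kappa_{\mathcal{B}}(\mathcal{X})\subseteq\kappa_{\mathcal{A}\cap\mathcal{B}}(\mathcal{X})$). $\mathcal{X}^*$ denotes the finite sequences over $\mathcal{X}$. The unrealized gain is $\mathrm{uG}_{\mathcal{A}}(s)=\max\{G_{\mathcal{A}}(s,\vec{Y}):\vec{Y}\in\kappa_{\mathcal{A}}(\emptyset)^*\}$;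 the external gain is $\mathrm{xG}_{\mathcal{A}}(s,\vec{Y})=G_{\mathcal{A}}(s,\vec{Y})-\mathrm{uG}_{\mathcal{A}}(s)$. The MEV extracted by $\mathcal{A}$ from a mempool $\mathcal{P}\subseteq\mathbb{X}$ in $s$ is $\mathrm{MEV}_{\mathcal{A}}(s,\mathcal{P})=\max\{\mathrm{xG}_{\mathcal{A}}(s,\vec{Y}):\vec{Y}\in\kappa_{\mathcal{A}}(\mathcal{P})^*\}$. *)

theory Defs
  imports "HOL-Library.Countable"
begin

(* Blockchain states: 'c = contract state, wallet state 'a => 't => nat.
   Transition function: partial, modelled with option. *)

type_synonym ('c,'a,'t) bstate = "'c \<times> ('a \<Rightarrow> 't \<Rightarrow> nat)"
type_synonym ('c,'a,'t,'x) trans_fun = "('c,'a,'t) bstate \<Rightarrow> 'x \<Rightarrow> ('c,'a,'t) bstate option"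

definition fin_wallet :: "('t \<Rightarrow> nat) \<Rightarrow> bool" where
  "fin_wallet w \<longleftrightarrow> finite {t. w t \<noteq> 0}"

definition wallet_state :: "('a \<Rightarrow> 't \<Rightarrow> nat) \<Rightarrow> bool" where
  "wallet_state W \<longleftrightarrow> finite {(a, t). W a t \<noteq> 0}"

definition contract :: "('c,'a,'t,'x) trans_fun \<Rightarrow> ('c,'a,'t) bstate set \<Rightarrow> bool" where
  "contract tr S0 \<longleftrightarrow> (\<forall>s0\<in>S0. wallet_state (snd s0)) \<and>
     (\<forall>s x s'. wallet_state (snd s) \<longrightarrow> tr s x = Some s' \<longrightarrow> wallet_state (snd s'))"

definition valid :: "('c,'a,'t,'x) trans_fun \<Rightarrow> ('c,'a,'t) bstate \<Rightarrow> 'x \<Rightarrow> bool" where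
  "valid tr s x \<longleftrightarrow> (\<exists>s'. tr s x = Some s')"

definition step :: "('c,'a,'t,'x) trans_fun \<Rightarrow> ('c,'a,'t) bstate \<Rightarrow> 'x \<Rightarrow> ('c,'a,'t) bstate" where
  "step tr s x = (case tr s x of Some s' \<Rightarrow> s' | None \<Rightarrow> s)"

definition exec :: "('c,'a,'t,'x) trans_fun \<Rightarrow> ('c,'a,'t) bstate \<Rightarrow> 'x list \<Rightarrow> ('c,'a,'t) bstate" where
  "exec tr s Xs = foldl (step tr) s Xs"

definition reachable_from :: "('c,'a,'t,'x) trans_fun \<Rightarrow> ('c,'a,'t) bstate \<Rightarrow> ('c,'a,'t) bstate \<Rightarrow> bool" where
  "reachable_from tr s0 s \<longleftrightarrow> (\<exists>Xs. exec tr s0 Xs = s)"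

definition reachable :: "('c,'a,'t,'x) trans_fun \<Rightarrow> ('c,'a,'t) bstate set \<Rightarrow> ('c,'a,'t) bstate \<Rightarrow> bool" where
  "reachable tr S0 s \<longleftrightarrow> (\<exists>s0\<in>S0. reachable_from tr s0 s)"

definition WA :: "'a set \<Rightarrow> ('c,'a,'t) bstate \<Rightarrow> ('t \<Rightarrow> nat)" where
  "WA A s = (\<lambda>t. \<Sum>a\<in>{a\<in>A. snd s a t \<noteq> 0}. snd s a t)"

definition wealth_fun :: "(('t \<Rightarrow> nat) \<Rightarrow> nat) \<Rightarrow> bool" where
  "wealth_fun d \<longleftrightarrow> (\<forall>w w'. fin_wallet w \<longrightarrow> fin_wallet w' \<longrightarrow>
      d (\<lambda>t. w t + w' t) = d w + d w')"

definition wealthA :: "(('t \<Rightarrow> nat) \<Rightarrow> nat) \<Rightarrow> 'a set \<Rightarrow> ('c,'a,'t) bstate \<Rightarrow> nat" where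
  "wealthA d A s = d (WA A s)"

definition gain :: "(('t \<Rightarrow> nat) \<Rightarrow> nat) \<Rightarrow> ('c,'a,'t,'x) trans_fun \<Rightarrow> 'a set
      \<Rightarrow> ('c,'a,'t) bstate \<Rightarrow> 'x list \<Rightarrow> int" where
  "gain d tr A s Xs = int (wealthA d A (exec tr s Xs)) - int (wealthA d A s)"

definition bounded :: "(('t \<Rightarrow> nat) \<Rightarrow> nat) \<Rightarrow> ('c,'a,'t,'x) trans_fun \<Rightarrow> ('c,'a,'t) bstate set \<Rightarrow> bool" where
  "bounded d tr S0 \<longleftrightarrow> (\<forall>s0\<in>S0. \<exists>n. \<forall>s. reachable_from tr s0 s \<longrightarrow> wealthA d UNIV s < n)"

definition deducibility :: "('a set \<Rightarrow> 'x set \<Rightarrow> 'x set) \<Rightarrow> bool" where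
  "deducibility \<kappa> \<longleftrightarrow>
     (\<forall>A X. X \<subseteq> \<kappa> A X) \<and>
     (\<forall>A X. \<kappa> A (\<kappa> A X) = \<kappa> A X) \<and>
     (\<forall>A A' X X'. A \<subseteq> A' \<longrightarrow> X \<subseteq> X' \<longrightarrow> \<kappa> A X \<subseteq> \<kappa> A' X') \<and>
     (\<forall>A (Xc :: nat \<Rightarrow> 'x set). (\<forall>i. Xc i \<subseteq> Xc (Suc i)) \<longrightarrow>
         \<kappa> A (\<Union>i. Xc i) = (\<Union>i. \<kappa> A (Xc i))) \<and>
     (\<forall>X0. finite X0 \<longrightarrow> (\<exists>A0. finite A0 \<and> X0 \<subseteq> \<kappa> A0 {})) \<and>
     (\<forall>A A'. \<kappa> A {} \<subseteq> \<kappa> A' {} \<longrightarrow> A \<subseteq> A') \<and>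
     (\<forall>A B X. \<kappa> A X \<inter> \<kappa> B X \<subseteq> \<kappa> (A \<inter> B) X)"

definition is_greatest :: "int set \<Rightarrow> int \<Rightarrow> bool" where
  "is_greatest S m \<longleftrightarrow> m \<in> S \<and> (\<forall>x\<in>S. x \<le> m)"

definition uG_set :: "('a set \<Rightarrow> 'x set \<Rightarrow> 'x set) \<Rightarrow> (('t \<Rightarrow> nat) \<Rightarrow> nat) \<Rightarrow> ('c,'a,'t,'x) trans_fun
      \<Rightarrow> 'a set \<Rightarrow> ('c,'a,'t) bstate \<Rightarrow> int set" where
  "uG_set \<kappa> d tr A s = {gain d tr A s Ys | Ys. set Ys \<subseteq> \<kappa> A {}}"

definition uG :: "('a set \<Rightarrow> 'x set \<Rightarrow> 'x set) \<Rightarrow> (('t \<Rightarrow> nat) \<Rightarrow> nat) \<Rightarrow> ('c,'a,'t,'x) trans_fun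
      \<Rightarrow> 'a set \<Rightarrow> ('c,'a,'t) bstate \<Rightarrow> int" where
  "uG \<kappa> d tr A s = (GREATEST g. g \<in> uG_set \<kappa> d tr A s)"

definition xG :: "('a set \<Rightarrow> 'x set \<Rightarrow> 'x set) \<Rightarrow> (('t \<Rightarrow> nat) \<Rightarrow> nat) \<Rightarrow> ('c,'a,'t,'x) trans_fun
      \<Rightarrow> 'a set \<Rightarrow> ('c,'a,'t) bstate \<Rightarrow> 'x list \<Rightarrow> int" where
  "xG \<kappa> d tr A s Ys = gain d tr A s Ys - uG \<kappa> d tr A s"

definition MEV_set :: "('a set \<Rightarrow> 'x set \<Rightarrow> 'x set) \<Rightarrow> (('t \<Rightarrow> nat) \<Rightarrow> nat) \<Rightarrow> ('c,'a,'t,'x) trans_fun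
      \<Rightarrow> 'a set \<Rightarrow> ('c,'a,'t) bstate \<Rightarrow> 'x set \<Rightarrow> int set" where
  "MEV_set \<kappa> d tr A s P = {xG \<kappa> d tr A s Ys | Ys. set Ys \<subseteq> \<kappa> A P}"

definition MEV :: "('a set \<Rightarrow> 'x set \<Rightarrow> 'x set) \<Rightarrow> (('t \<Rightarrow> nat) \<Rightarrow> nat) \<Rightarrow> ('c,'a,'t,'x) trans_fun
      \<Rightarrow> 'a set \<Rightarrow> ('c,'a,'t) bstate \<Rightarrow> 'x set \<Rightarrow> int" where
  "MEV \<kappa> d tr A s P = (GREATEST g. g \<in> MEV_set \<kappa> d tr A s P)"

end

theory Submission
  imports Defs
begin

lemma int_greatest_ex:
  fixes S :: "int set"
  assumes "x0 \<in> S" and "\<forall>x\<in>S. x \<le> b"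
  shows "\<exists>m. is_greatest S m"
proof -
  let ?T = "{x\<in>S. x0 \<le> x}"
  have fin: "finite ?T" by (rule finite_subset[of _ "{x0..b}"]) (use assms in auto)
  have ne: "x0 \<in> ?T" using assms by auto
  have "Max ?T \<in> S" using Max_in[OF fin] ne by auto
  moreover have "\<forall>x\<in>S. x \<le> Max ?T"
  proof
    fix x assume "x \<in> S"
    show "x \<le> Max ?T"
    proof (cases "x0 \<le> x")
      case True then show ?thesis using Max_ge[OF fin] \<open>x\<in>S\<close> by auto
    next
      case False then show ?thesis using Max_ge[OF fin ne] by auto
    qed
  qed
  ultimately show ?thesis unfolding is_greatest_def by blast
qed

lemma is_greatest_Greatest:
  "is_greatest S m \<Longrightarrow> (GREATEST g. g \<in> S) = m"
  unfolding is_greatest_def by (rule Greatest_equality) auto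

lemma exec_append: "exec tr s (Xs @ Ys) = exec tr (exec tr s Xs) Ys"
  unfolding exec_def by simp

lemma ws_exec:
  assumes "contract tr S0" "wallet_state (snd s)"
  shows "wallet_state (snd (exec tr s Xs))"
  using assms(2) unfolding exec_def
proof (induction Xs arbitrary: s)
  case Nil then show ?case by simp
next
  case (Cons x Xs)
  have "wallet_state (snd (step tr s x))"
  proof (cases "tr s x")
    case None then show ?thesis by (simp add: step_def Cons.prems)
  next
    case (Some s')
    then have "wallet_state (snd s')" using assms(1) Cons.prems unfolding contract_def by blast
    then show ?thesis using Some by (simp add: step_def)
  qed
  then show ?case using Cons.IH by simp
qed

lemma fin_WA:
  assumes "wallet_state W"
  shows "fin_wallet (WA A (c, W))"
proof -
  have "{t. WA A (c, W) t \<noteq> 0} \<subseteq> snd ` {(a, t). W a t \<noteq> 0}"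
  proof
    fix t assume "t \<in> {t. WA A (c, W) t \<noteq> 0}"
    then have "(\<Sum>a\<in>{a\<in>A. W a t \<noteq> 0}. W a t) \<noteq> 0" unfolding WA_def by simp
    then have "{a\<in>A. W a t \<noteq> 0} \<noteq> {}" by (intro notI) simp
    then obtain a where "W a t \<noteq> 0" by blast
    then have "(a, t) \<in> {(a, t). W a t \<noteq> 0}" by simp
    then show "t \<in> snd ` {(a, t). W a t \<noteq> 0}" by (rule rev_image_eqI) simp
  qed
  moreover have "finite (snd ` {(a, t). W a t \<noteq> 0})"
    using assms unfolding wallet_state_def by (rule finite_imageI)
  ultimately show ?thesis unfolding fin_wallet_def by (rule finite_subset)
qed

lemma WA_split:
  assumes "wallet_state W"
  shows "WA UNIV (c, W) = (\<lambda>t. WA A (c, W) t + WA (-A) (c, W) t)"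
proof
  fix t
  have fin: "finite {a. W a t \<noteq> 0}"
  proof -
    have "{a. W a t \<noteq> 0} \<subseteq> fst ` {(a, t). W a t \<noteq> 0}"
    proof
      fix a assume "a \<in> {a. W a t \<noteq> 0}"
      then have "(a, t) \<in> {(a, t). W a t \<noteq> 0}" by simp
      then show "a \<in> fst ` {(a, t). W a t \<noteq> 0}" by (rule rev_image_eqI) simp
    qed
    moreover have "finite (fst ` {(a, t). W a t \<noteq> 0})"
      using assms unfolding wallet_state_def by (rule finite_imageI)
    ultimately show ?thesis by (rule finite_subset)
  qed
  have eqs: "{a \<in> UNIV. W a t \<noteq> 0} = {a\<in>A. W a t \<noteq> 0} \<union> {a\<in>-A. W a t \<noteq> 0}" by blast
  have su: "sum (\<lambda>a. W a t) ({a\<in>A. W a t \<noteq> 0} \<union> {a\<in>-A. W a t \<noteq> 0})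
     = sum (\<lambda>a. W a t) {a\<in>A. W a t \<noteq> 0} + sum (\<lambda>a. W a t) {a\<in>-A. W a t \<noteq> 0}"
  proof (rule sum.union_disjoint)
    show "finite {a\<in>A. W a t \<noteq> 0}" by (rule finite_subset[OF _ fin]) blast
    show "finite {a\<in>-A. W a t \<noteq> 0}" by (rule finite_subset[OF _ fin]) blast
    show "{a\<in>A. W a t \<noteq> 0} \<inter> {a\<in>-A. W a t \<noteq> 0} = {}" by blast
  qed
  have "WA UNIV (c, W) t = sum (\<lambda>a. W a t) {a \<in> UNIV. W a t \<noteq> 0}"
    unfolding WA_def by (simp only: snd_conv)
  also have "\<dots> = sum (\<lambda>a. W a t) ({a\<in>A. W a t \<noteq> 0} \<union> {a\<in>-A. W a t \<noteq> 0})"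
    by (simp only: eqs)
  also have "\<dots> = WA A (c, W) t + WA (-A) (c, W) t"
    unfolding su WA_def by (simp only: snd_conv)
  finally show "WA UNIV (c, W) t = WA A (c, W) t + WA (-A) (c, W) t" .
qed

lemma wealth_le:
  assumes "wealth_fun d" "wallet_state (snd s)"
  shows "wealthA d A s \<le> wealthA d UNIV s"
proof -
  obtain c W where s: "s = (c, W)" by (cases s)
  have W: "wallet_state W" using assms s by simp
  have "d (WA UNIV (c, W)) = d (WA A (c, W)) + d (WA (-A) (c, W))"
  proof -
    have "d (\<lambda>t. WA A (c, W) t + WA (-A) (c, W) t) = d (WA A (c, W)) + d (WA (-A) (c, W))"
      using assms(1) fin_WA[OF W, of A c] fin_WA[OF W, of "-A" c] unfolding wealth_fun_def by (elim allE impE) assumption+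
    then show ?thesis by (subst WA_split[OF W, of c A]) assumption
  qed
  then show ?thesis unfolding wealthA_def s by simp
qed

theorem mainTheorem9:
  fixes tr :: "('c, 'a :: countable, 't, 'x) trans_fun"
    and S0 :: "('c, 'a, 't) bstate set"
    and d :: "('t \<Rightarrow> nat) \<Rightarrow> nat"
    and \<kappa> :: "'a set \<Rightarrow> 'x set \<Rightarrow> 'x set"
    and A :: "'a set" and P :: "'x set" and s :: "('c, 'a, 't) bstate"
  assumes "infinite (UNIV :: 'a set)"
    and "contract tr S0"
    and "wealth_fun d"
    and "deducibility \<kappa>"
    and "bounded d tr S0"
    and "reachable tr S0 s"
  shows "(\<exists>u. is_greatest (uG_set \<kappa> d tr A s) u)
       \<and> (\<exists>m. is_greatest (MEV_set \<kappa> d tr A s P) m)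
       \<and> 0 \<le> MEV \<kappa> d tr A s P"
proof -
  obtain s0 Xs where s0: "s0 \<in> S0" and sX: "exec tr s0 Xs = s"
    using assms(6) unfolding reachable_def reachable_from_def by blast
  obtain n where n: "\<forall>s'. reachable_from tr s0 s' \<longrightarrow> wealthA d UNIV s' < n"
    using assms(5) s0 unfolding bounded_def by blast
  have ws0: "wallet_state (snd s0)" using assms(2) s0 unfolding contract_def by blast
  have gb: "gain d tr A s Ys \<le> int n" for Ys
  proof -
    have eq: "exec tr s0 (Xs @ Ys) = exec tr s Ys" by (simp add: exec_append sX)
    have r: "reachable_from tr s0 (exec tr s Ys)"
      unfolding reachable_from_def using eq by blast
    have "wallet_state (snd (exec tr s Ys))"
      using ws_exec[OF assms(2) ws0, of "Xs @ Ys"] eq by simp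
    then have "wealthA d A (exec tr s Ys) \<le> wealthA d UNIV (exec tr s Ys)"
      using wealth_le[OF assms(3)] by blast
    moreover have "wealthA d UNIV (exec tr s Ys) < n" using n r by blast
    ultimately show ?thesis unfolding gain_def by linarith
  qed
  have e0: "gain d tr A s [] \<in> uG_set \<kappa> d tr A s" unfolding uG_set_def by auto
  have ub: "\<forall>x\<in>uG_set \<kappa> d tr A s. x \<le> int n"
  proof
    fix x assume "x \<in> uG_set \<kappa> d tr A s"
    then obtain Zs where "x = gain d tr A s Zs" unfolding uG_set_def by blast
    then show "x \<le> int n" using gb by simp
  qed
  obtain u where u: "is_greatest (uG_set \<kappa> d tr A s) u"
    using int_greatest_ex[OF e0 ub] by blast
  have uGu: "uG \<kappa> d tr A s = u" unfolding uG_def using is_greatest_Greatest[OF u] .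
  have "u \<in> uG_set \<kappa> d tr A s" using u unfolding is_greatest_def by (elim conjE)
  then obtain Ys where Ys: "set Ys \<subseteq> \<kappa> A {}" "gain d tr A s Ys = u"
    unfolding uG_set_def by blast
  have mono: "\<forall>A A' X X'. A \<subseteq> A' \<longrightarrow> X \<subseteq> X' \<longrightarrow> \<kappa> A X \<subseteq> \<kappa> A' X'"
    using assms(4) unfolding deducibility_def by (elim conjE)
  have sub: "\<kappa> A {} \<subseteq> \<kappa> A P" using mono by blast
  have "\<exists>Zs. 0 = xG \<kappa> d tr A s Zs \<and> set Zs \<subseteq> \<kappa> A P"
  proof (intro exI conjI)
    show "0 = xG \<kappa> d tr A s Ys" by (simp add: xG_def uGu Ys(2))
    show "set Ys \<subseteq> \<kappa> A P" using Ys(1) sub by (rule order_trans)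
  qed
  then have m0: "0 \<in> MEV_set \<kappa> d tr A s P" unfolding MEV_set_def by simp
  have mb: "\<forall>x\<in>MEV_set \<kappa> d tr A s P. x \<le> int n - u"
  proof
    fix x assume "x \<in> MEV_set \<kappa> d tr A s P"
    then obtain Zs where "x = xG \<kappa> d tr A s Zs" unfolding MEV_set_def by blast
    then have "x = gain d tr A s Zs - u" by (simp add: xG_def uGu)
    then show "x \<le> int n - u" using gb[of Zs] by linarith
  qed
  obtain m where m: "is_greatest (MEV_set \<kappa> d tr A s P) m"
    using int_greatest_ex[OF m0 mb] by blast
  have "MEV \<kappa> d tr A s P = m" unfolding MEV_def using is_greatest_Greatest[OF m] .
  moreover have "0 \<le> m" using m m0 unfolding is_greatest_def by blast
  ultimately have "0 \<le> MEV \<kappa> d tr A s P" by simp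
  then show ?thesis using u m by blast
qed

end
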